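(* Let $N,j,k,m$ be integers. Work with a variable $q^{1/8}$, set $v=q^{1/2}$, $\{n\}=v^n-v^{-n}$, $A(a,k)=\{a-k\}\{a+k\}$ and $t_{j,N}=i^{N-1-j}q^{(N+j)^2/8}$. Then: (1) $A(N-j,k)-A(N+j,k)-2\{2j\}\{N\}\{N-1\}/\{1\}$ is divisible by $\{N\}^2$ in $\mathbb Z[v^{\pm1}]$; (2) $\{N-j\}=-\{N+j\}+\{N\}(v^j+v^{-j})$; (3) there exists $Q\in\mathbb Q[v^{\pm1}]$ such that $t_{-j,N}^m=t_{j,N}^m+\frac{mj}{2}\,t_{j,N}^m\{N\}+t_{j,N}^m(v^N+1)^2Q$.
   Context: All quantities are Laurent polynomials in $q^{1/8}$ with coefficients in $\mathbb Q(i)$; $\{2j\}/\{1\}\in\mathbb Z[v^{\pm1}]$, so the expression in (1) lies in $\mathbb Z[v^{\pm1}]$. *)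

theory Defs
  imports Complex_Main "HOL-Computational_Algebra.Formal_Laurent_Series"
begin

text \<open>Laurent polynomials in x = q^(1/8) with complex coefficients (Q(i) is a subfield of C),
  represented as formal Laurent series; v = q^(1/2) = x^4.\<close>

type_synonym lp = "complex fls"

definition vpow :: "int \<Rightarrow> lp" where
  "vpow n = fls_X_intpow (4 * n)"

definition br :: "int \<Rightarrow> lp" where
  "br n = vpow n - vpow (- n)"

definition AA :: "int \<Rightarrow> int \<Rightarrow> lp" where
  "AA a k = br (a - k) * br (a + k)"

definition tt :: "int \<Rightarrow> int \<Rightarrow> lp" where
  "tt j N = fls_const (\<i> powi (N - 1 - j)) * fls_X_intpow ((N + j)\<^sup>2)"

definition in_ZV :: "lp \<Rightarrow> bool" where
  "in_ZV f \<longleftrightarrow> finite {n. fls_nth f n \<noteq> 0} \<and> (\<forall>n. fls_nth f n \<in> \<int>) \<and> (\<forall>n. fls_nth f n \<noteq> 0 \<longrightarrow> 4 dvd n)"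

definition in_QV :: "lp \<Rightarrow> bool" where
  "in_QV f \<longleftrightarrow> finite {n. fls_nth f n \<noteq> 0} \<and> (\<forall>n. fls_nth f n \<in> \<rat>) \<and> (\<forall>n. fls_nth f n \<noteq> 0 \<longrightarrow> 4 dvd n)"

end

theory Submission
  imports Defs
begin

definition inR :: "complex set \<Rightarrow> lp \<Rightarrow> bool" where
  "inR S f \<longleftrightarrow> finite {n. fls_nth f n \<noteq> 0} \<and> (\<forall>n. fls_nth f n \<in> S) \<and> (\<forall>n. fls_nth f n \<noteq> 0 \<longrightarrow> 4 dvd n)"

definition sr :: "complex set \<Rightarrow> bool" where
  "sr S \<longleftrightarrow> 0 \<in> S \<and> 1 \<in> S \<and> (\<forall>a\<in>S. \<forall>b\<in>S. a + b \<in> S \<and> a * b \<in> S) \<and> (\<forall>a\<in>S. - a \<in> S)"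

lemma sr_Ints: "sr \<int>" by (simp add: sr_def)
lemma sr_Rats: "sr \<rat>" by (simp add: sr_def)

lemma inR_0: "sr S \<Longrightarrow> inR S 0" by (simp add: inR_def sr_def)

lemma inR_add: assumes "sr S" "inR S f" "inR S g" shows "inR S (f + g)"
proof -
  have "{n. fls_nth (f+g) n \<noteq> 0} \<subseteq> {n. fls_nth f n \<noteq> 0} \<union> {n. fls_nth g n \<noteq> 0}" by auto
  then show ?thesis using assms unfolding inR_def sr_def
    by (auto intro: finite_subset)
qed

lemma inR_uminus: assumes "sr S" "inR S f" shows "inR S (- f)"
  using assms unfolding inR_def sr_def by auto

lemma inR_diff: assumes "sr S" "inR S f" "inR S g" shows "inR S (f - g)"
  using inR_add[OF assms(1,2) inR_uminus[OF assms(1,3)]] by simp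

lemma mono_nth: "fls_nth (fls_const (c::complex) * fls_X_intpow k) n = (if n = k then c else 0)"
proof -
  have "fls_const c * fls_X_intpow k = fls_X_intpow k * (fls_const c :: lp)" by (rule mult.commute)
  also have "\<dots> = fls_shift (-k) (fls_const c)" by (rule fls_X_intpow_times_conv_shift(1))
  finally show ?thesis by simp
qed

lemma mono_mult: "(fls_const a * fls_X_intpow p) * (fls_const b * fls_X_intpow q :: lp) = fls_const (a*b) * fls_X_intpow (p+q)"
proof -
  have "(fls_const a * fls_X_intpow p) * (fls_const b * fls_X_intpow q :: lp) = (fls_const a * fls_const b) * (fls_X_intpow p * fls_X_intpow q)"
    by (simp only: mult_ac)
  also have "\<dots> = fls_const (a*b) * fls_X_intpow (p+q)"
    by (simp only: fls_X_intpow_times_fls_X_intpow fls_const_mult_const)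
  finally show ?thesis .
qed

lemma inR_mono: assumes "sr S" "c \<in> S" "4 dvd k" shows "inR S (fls_const c * fls_X_intpow k)"
proof -
  have "{n. fls_nth (fls_const c * fls_X_intpow k) n \<noteq> 0} \<subseteq> {k}" by (auto simp: mono_nth split: if_splits)
  then show ?thesis using assms unfolding inR_def sr_def by (auto intro: finite_subset simp: mono_nth)
qed

lemma inR_sum: assumes "sr S" "finite A" "\<And>x. x \<in> A \<Longrightarrow> inR S (f x)" shows "inR S (\<Sum>x\<in>A. f x)"
  using assms(2,3) by (induction A rule: finite_induct) (auto intro: inR_add inR_0 assms(1))

lemma decomp: fixes f :: lp assumes "finite {n. fls_nth f n \<noteq> 0}"
  shows "f = (\<Sum>n\<in>{n. fls_nth f n \<noteq> 0}. fls_const (fls_nth f n) * fls_X_intpow n)"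
proof (rule fls_eqI)
  fix m
  have "fls_nth (\<Sum>n\<in>{n. fls_nth f n \<noteq> 0}. fls_const (fls_nth f n) * fls_X_intpow n) m
     = (\<Sum>n\<in>{n. fls_nth f n \<noteq> 0}. if m = n then fls_nth f n else 0)"
    by (auto simp: fls_nth_sum intro!: sum.cong)
  also have "\<dots> = fls_nth f m" using assms by (simp add: sum.delta)
  finally show "fls_nth f m = fls_nth (\<Sum>n\<in>{n. fls_nth f n \<noteq> 0}. fls_const (fls_nth f n) * fls_X_intpow n) m" by simp
qed

lemma inR_mult: assumes S: "sr S" and f: "inR S f" and g: "inR S g" shows "inR S (f * g)"
proof -
  define A where "A = {n. fls_nth f n \<noteq> 0}"
  define B where "B = {n. fls_nth g n \<noteq> 0}"
  have fA: "finite A" "finite B" using f g by (auto simp: inR_def A_def B_def)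
  have "f * g = (\<Sum>a\<in>A. fls_const (fls_nth f a) * fls_X_intpow a) * (\<Sum>b\<in>B. fls_const (fls_nth g b) * fls_X_intpow b)"
    using decomp[of f] decomp[of g] fA by (simp add: A_def B_def)
  also have "\<dots> = (\<Sum>a\<in>A. \<Sum>b\<in>B. fls_const (fls_nth f a * fls_nth g b) * fls_X_intpow (a + b))"
    by (simp only: sum_product mono_mult)
  finally have eq: "f * g = \<dots>" .
  show ?thesis unfolding eq
    apply (rule inR_sum[OF S fA(1)])
    apply (rule inR_sum[OF S fA(2)])
    apply (rule inR_mono[OF S])
    using f g S unfolding inR_def sr_def A_def B_def by auto
qed

lemma inR_const: "sr S \<Longrightarrow> c \<in> S \<Longrightarrow> inR S (fls_const c)"
  using inR_mono[of S c 0] by simp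

lemma inR_vpow: "sr S \<Longrightarrow> inR S (vpow k)"
  using inR_mono[of S 1 "4*k"] by (simp add: vpow_def sr_def)

lemma inR_one: "sr S \<Longrightarrow> inR S 1"
  using inR_const[of S 1] by (simp add: sr_def)

lemma vpow_add: "vpow (a+b) = vpow a * vpow b"
  by (simp add: vpow_def fls_X_intpow_times_fls_X_intpow distrib_left)
lemma vpow_0[simp]: "vpow 0 = 1" by (simp add: vpow_def)
lemma vpow_nz[simp]: "vpow a \<noteq> 0" by (simp add: vpow_def)
lemma vpow_neg: "vpow (-a) = inverse (vpow a)"
  by (simp add: vpow_def fls_inverse_X_intpow)
lemma vpow_diff: "vpow (a-b) = vpow a / vpow b"
proof -
  have "a - b = a + -b" by simp
  then have "vpow (a-b) = vpow a * vpow (-b)" by (simp only: vpow_add)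
  then show ?thesis by (simp only: vpow_neg divide_inverse)
qed
lemma vpow_2: "vpow (2*a) = vpow a ^ 2"
proof -
  have "2*a = a + a" by simp
  then show ?thesis by (simp only: vpow_add power2_eq_square)
qed

lemma abs_part2: fixes a b :: "'a::field" assumes "a \<noteq> 0" "b \<noteq> 0"
  shows "a/b - inverse (a/b) = -(a*b - inverse (a*b)) + (a - inverse a)*(b + inverse b)"
  using assms by (simp add: field_simps)
lemma abs_AA: fixes a b c :: "'a::field" assumes "a \<noteq> 0" "b \<noteq> 0" "c \<noteq> 0"
  shows "(a/b/c - inverse (a/b/c)) * (a/b*c - inverse (a/b*c)) - (a*b/c - inverse (a*b/c)) * (a*b*c - inverse (a*b*c))
     = - (a^2 - inverse (a^2)) * (b^2 - inverse (b^2))"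
  using assms by (simp add: field_simps, algebra)
lemma abs_G_up: fixes x p G :: "'a::field" assumes "p - 1 = (x - 1) * G"
  shows "p * x - 1 = (x - 1) * (x * G + 1)"
  using assms by algebra
lemma abs_G_down: fixes x p G :: "'a::field" assumes "x \<noteq> 0" "p - 1 = (x - 1) * G"
  shows "p / x - 1 = (x - 1) * (inverse x * (G - 1))"
proof -
  have "(x - 1) * (inverse x * (G - 1)) = inverse x * ((x-1)*G - (x - 1))" by (simp add: algebra_simps)
  also have "\<dots> = inverse x * (p - x)" by (simp only: assms(2)[symmetric]) (simp add: algebra_simps)
  also have "\<dots> = p / x - 1" using assms(1) by (simp add: field_simps)
  finally show ?thesis ..
qed
lemma abs_P1: fixes a V S Y :: "'a::field" assumes "a \<noteq> 0" "V \<noteq> 0" "V - inverse V \<noteq> 0"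
  and "(V - inverse V) * S = Y"
  shows "- (a^2 - inverse (a^2)) * Y - 2 * Y * (a - inverse a) * (a/V - inverse (a/V)) / (V - inverse V)
     = (a - inverse a)^2 * (- (V + inverse V) * S)"
proof -
  have "2 * Y * (a - inverse a) * (a/V - inverse (a/V)) / (V - inverse V) = 2 * S * (a - inverse a) * (a/V - inverse (a/V))"
    using assms(3) unfolding assms(4)[symmetric] by simp
  moreover have "- (a^2 - inverse (a^2)) * ((V - inverse V) * S) - 2 * S * (a - inverse a) * (a/V - inverse (a/V))
     = (a - inverse a)^2 * (- (V + inverse V) * S)"
    using assms(1,2) by (simp add: field_simps, algebra)
  ultimately show ?thesis using assms(4) by simp
qed
lemma abs_F_up: fixes w x h n P Q G :: "'a::field" assumes "w \<noteq> 0" "x = - inverse w" "2*h = 1"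
  "P = 1 + n*h*(w - inverse w) + (w+1)^2*Q" "P - 1 = (x - 1)*G"
  shows "P * x = 1 + (n+1)*h*(w - inverse w) + (w+1)^2*(Q + inverse (w^2) * (G + inverse x * h))"
proof -
  have ix: "inverse x = - w" using assms(1,2) by simp
  have "P * x = P + (x - 1) * (P - 1) + (x - 1)" by (simp add: algebra_simps)
  also have "\<dots> = P + (x-1)^2 * G + (x - 1)" using assms(5) by (simp add: power2_eq_square)
  finally have e: "P * x = P + (x-1)^2 * G + (x - 1)" .
  show ?thesis unfolding e ix unfolding assms(4) assms(2) using assms(1,3)
    by (simp add: field_simps, algebra)
qed
lemma abs_F_down: fixes w x h n P Q G P' :: "'a::field" assumes "w \<noteq> 0" "x = - inverse w" "2*h = 1"
  "P = 1 + n*h*(w - inverse w) + (w+1)^2*Q" "P' = P / x" "P' - 1 = (x - 1)*G"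
  shows "P' = 1 + (n-1)*h*(w - inverse w) + (w+1)^2*(Q - inverse (w^2) * (G + inverse x * h))"
proof -
  have ix: "inverse x = - w" using assms(1,2) by simp
  have xn: "x \<noteq> 0" using assms(1,2) by simp
  have "P = P' * x" using assms(5) xn by simp
  also have "P' * x = P' + (x - 1) * (P' - 1) + (x - 1)" by (simp add: algebra_simps)
  also have "\<dots> = P' + (x-1)^2 * G + (x - 1)" using assms(6) by (simp add: power2_eq_square)
  finally have e: "P' = P - (x-1)^2 * G - (x - 1)" by simp
  show ?thesis unfolding e ix unfolding assms(4) assms(2) using assms(1,3)
    by (simp add: field_simps, algebra)
qed

lemma abs_S_up: fixes V b S :: "'a::field" assumes "V \<noteq> 0" "b \<noteq> 0" "(V - inverse V) * S = b^2 - inverse (b^2)"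
  shows "(V - inverse V) * (S + (b^2 * V + inverse (b^2 * V))) = b^2*V*V - inverse (b^2*V*V)"
proof -
  have "(V - inverse V) * (S + (b^2 * V + inverse (b^2 * V))) = (b^2 - inverse (b^2)) + (V - inverse V) * (b^2 * V + inverse (b^2 * V))"
    using assms(3) by (simp add: distrib_left)
  also have "\<dots> = b^2*V*V - inverse (b^2*V*V)" using assms(1,2) by (simp add: field_simps, (algebra)?)
  finally show ?thesis .
qed

lemma abs_S_down: fixes V b S :: "'a::field" assumes "V \<noteq> 0" "b \<noteq> 0" "(V - inverse V) * S = b^2 - inverse (b^2)"
  shows "(V - inverse V) * (S - (b^2 / V + inverse (b^2 / V))) = b^2/V/V - inverse (b^2/V/V)"
proof -
  have "(V - inverse V) * (S - (b^2 / V + inverse (b^2 / V))) = (b^2 - inverse (b^2)) - (V - inverse V) * (b^2 / V + inverse (b^2 / V))"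
    using assms(3) by (simp add: right_diff_distrib)
  also have "\<dots> = b^2/V/V - inverse (b^2/V/V)" using assms(1,2) by (simp add: field_simps)
  finally show ?thesis .
qed

lemma part2: "br (N - j) = - br (N + j) + br N * (vpow j + vpow (- j))"
  unfolding br_def by (simp only: vpow_diff vpow_add vpow_neg abs_part2[OF vpow_nz vpow_nz])

lemma Slem: "\<exists>S. inR \<int> S \<and> br 1 * S = br (2*j)"
proof (induction j rule: int_induct[where k=0])
  case base
  show ?case by (rule exI[of _ 0]) (simp add: inR_0 sr_Ints br_def)
next
  case (step1 i)
  then obtain S where S: "inR \<int> S" "br 1 * S = br (2*i)" by blast
  have S2: "(vpow 1 - inverse (vpow 1)) * S = vpow i ^ 2 - inverse (vpow i ^ 2)"
    using S(2) unfolding br_def by (simp only: vpow_neg vpow_2)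
  have e1: "2*(i+1) = 2*i + 1 + 1" "-2*i-1 = -(2*i+1)" by simp_all
  have "br 1 * (S + (vpow (2*i+1) + vpow (-2*i-1))) = br (2*(i+1))"
    unfolding br_def e1 by (simp only: vpow_add vpow_neg vpow_2 vpow_diff) (rule abs_S_up[OF vpow_nz vpow_nz S2])
  moreover have "inR \<int> (S + (vpow (2*i+1) + vpow (-2*i-1)))"
    by (intro inR_add S(1) inR_vpow sr_Ints)
  ultimately show ?case by blast
next
  case (step2 i)
  then obtain S where S: "inR \<int> S" "br 1 * S = br (2*i)" by blast
  have S2: "(vpow 1 - inverse (vpow 1)) * S = vpow i ^ 2 - inverse (vpow i ^ 2)"
    using S(2) unfolding br_def by (simp only: vpow_neg vpow_2)
  have e1: "2*(i-1) = 2*i - 1 - 1" "1-2*i = -(2*i-1)" by simp_all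
  have "br 1 * (S - (vpow (2*i-1) + vpow (1-2*i))) = br (2*(i-1))"
    unfolding br_def e1 by (simp only: vpow_add vpow_neg vpow_2 vpow_diff) (rule abs_S_down[OF vpow_nz vpow_nz S2])
  moreover have "inR \<int> (S - (vpow (2*i-1) + vpow (1-2*i)))"
    by (intro inR_add inR_diff S(1) inR_vpow sr_Ints)
  ultimately show ?case by blast
qed


lemma in_ZV_eq: "in_ZV = inR \<int>" by (simp add: fun_eq_iff in_ZV_def inR_def)
lemma in_QV_eq: "in_QV = inR \<rat>" by (simp add: fun_eq_iff in_QV_def inR_def)

lemma br1_nz: "vpow 1 - inverse (vpow 1) \<noteq> 0"
proof
  assume "vpow 1 - inverse (vpow 1) = 0"
  then have "vpow 1 = vpow (-1)" by (simp only: vpow_neg right_minus_eq)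
  moreover have "fls_subdegree (vpow 1) = 4" "fls_subdegree (vpow (-1)) = -4" by (simp_all add: vpow_def)
  ultimately show False by simp
qed

lemma part1: "\<exists>P. in_ZV P \<and>
            AA (N - j) k - AA (N + j) k - 2 * br (2 * j) * br N * br (N - 1) / br 1 = (br N)\<^sup>2 * P"
proof -
  obtain S where S: "inR \<int> S" "br 1 * S = br (2*j)" using Slem by blast
  have S2: "(vpow 1 - inverse (vpow 1)) * S = vpow j ^ 2 - inverse (vpow j ^ 2)"
    using S(2) unfolding br_def by (simp only: vpow_neg vpow_2)
  have "AA (N - j) k - AA (N + j) k - 2 * br (2 * j) * br N * br (N - 1) / br 1 = (br N)\<^sup>2 * (-(vpow 1 + vpow (-1)) * S)"
    unfolding AA_def br_def
    by (simp only: vpow_add vpow_diff vpow_neg vpow_2 abs_AA[OF vpow_nz vpow_nz vpow_nz] abs_P1[OF vpow_nz vpow_nz br1_nz S2])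
  moreover have "in_ZV (-(vpow 1 + vpow (-1)) * S)"
    unfolding in_ZV_eq by (intro inR_mult inR_uminus inR_add inR_vpow S(1) sr_Ints)
  ultimately show ?thesis by blast
qed

lemma s_facts: assumes "s = - inverse (vpow N)"
  shows "s \<noteq> 0" "inR \<rat> s" "inverse s = - vpow N" "inR \<rat> (inverse s)"
proof -
  show "s \<noteq> 0" using assms by simp
  have "s = - vpow (-N)" using assms by (simp only: vpow_neg)
  then show "inR \<rat> s" by (simp only: inR_uminus inR_vpow sr_Rats)
  show "inverse s = - vpow N" using assms by (simp only: inverse_minus_eq inverse_inverse_eq)
  then show "inR \<rat> (inverse s)" by (simp only: inR_uminus inR_vpow sr_Rats)
qed

lemma Glem: assumes sd: "s = - inverse (vpow N)"
  shows "\<exists>G. inR \<rat> G \<and> s powi n - 1 = (s - 1) * G"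
proof (induction n rule: int_induct[where k=0])
  case base
  show ?case by (rule exI[of _ 0]) (simp add: inR_0 sr_Rats)
next
  case (step1 i)
  then obtain G where G: "inR \<rat> G" "s powi i - 1 = (s - 1) * G" by blast
  have "s powi (i+1) = s powi i * s" using s_facts(1)[OF sd] by (simp add: power_int_add_1)
  then have "s powi (i+1) - 1 = (s - 1) * (s * G + 1)" using abs_G_up[OF G(2)] by simp
  moreover have "inR \<rat> (s * G + 1)" by (intro inR_add inR_mult inR_one G(1) s_facts(2)[OF sd] sr_Rats)
  ultimately show ?case by blast
next
  case (step2 i)
  then obtain G where G: "inR \<rat> G" "s powi i - 1 = (s - 1) * G" by blast
  have "s powi (i-1) = s powi i / s" using s_facts(1)[OF sd] by (simp add: power_int_diff)
  then have "s powi (i-1) - 1 = (s - 1) * (inverse s * (G - 1))" using abs_G_down[OF s_facts(1)[OF sd] G(2)] by simp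
  moreover have "inR \<rat> (inverse s * (G - 1))" by (intro inR_diff inR_mult inR_one G(1) s_facts(4)[OF sd] sr_Rats)
  ultimately show ?case by blast
qed

lemma h2: "2 * fls_const (1/2::complex) = 1"
proof -
  have "(2::lp) * fls_const (1/2) = fls_const 2 * fls_const (1/2)" by simp
  also have "\<dots> = fls_const (2 * (1/2))" by (rule fls_const_mult_const)
  finally show ?thesis by simp
qed

lemma inR_iw2: "inR \<rat> (inverse ((vpow N)^2))"
proof -
  have "inverse ((vpow N)^2) = vpow (-(2*N))" by (simp only: vpow_neg vpow_2)
  then show ?thesis by (simp only: inR_vpow sr_Rats)
qed

lemma Flem: assumes sd: "s = - inverse (vpow N)"
  shows "\<exists>Q. inR \<rat> Q \<and> s powi n = 1 + of_int n * fls_const (1/2) * (vpow N - inverse (vpow N)) + (vpow N + 1)^2 * Q"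
proof (induction n rule: int_induct[where k=0])
  case base
  show ?case by (rule exI[of _ 0]) (simp add: inR_0 sr_Rats)
next
  case (step1 i)
  then obtain Q where Q: "inR \<rat> Q" "s powi i = 1 + of_int i * fls_const (1/2) * (vpow N - inverse (vpow N)) + (vpow N + 1)^2 * Q" by blast
  obtain G where G: "inR \<rat> G" "s powi i - 1 = (s - 1) * G" using Glem[OF sd] by blast
  have "s powi (i+1) = s powi i * s" using s_facts(1)[OF sd] by (simp add: power_int_add_1)
  also have "\<dots> = 1 + (of_int i + 1) * fls_const (1/2) * (vpow N - inverse (vpow N)) + (vpow N + 1)^2 * (Q + inverse ((vpow N)^2) * (G + inverse s * fls_const (1/2)))"
    by (rule abs_F_up[OF vpow_nz sd h2 Q(2) G(2)])
  finally have "s powi (i+1) = 1 + of_int (i+1) * fls_const (1/2) * (vpow N - inverse (vpow N)) + (vpow N + 1)^2 * (Q + inverse ((vpow N)^2) * (G + inverse s * fls_const (1/2)))"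
    by simp
  moreover have "inR \<rat> (Q + inverse ((vpow N)^2) * (G + inverse s * fls_const (1/2)))"
    by (intro inR_add inR_mult inR_iw2 Q(1) G(1) s_facts(4)[OF sd] inR_const sr_Rats) simp
  ultimately show ?case by blast
next
  case (step2 i)
  then obtain Q where Q: "inR \<rat> Q" "s powi i = 1 + of_int i * fls_const (1/2) * (vpow N - inverse (vpow N)) + (vpow N + 1)^2 * Q" by blast
  obtain G where G: "inR \<rat> G" "s powi (i-1) - 1 = (s - 1) * G" using Glem[OF sd] by blast
  have P: "s powi (i-1) = s powi i / s" using s_facts(1)[OF sd] by (simp add: power_int_diff)
  have "s powi (i-1) = 1 + (of_int i - 1) * fls_const (1/2) * (vpow N - inverse (vpow N)) + (vpow N + 1)^2 * (Q - inverse ((vpow N)^2) * (G + inverse s * fls_const (1/2)))"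
    by (rule abs_F_down[OF vpow_nz sd h2 Q(2) P G(2)])
  then have "s powi (i-1) = 1 + of_int (i-1) * fls_const (1/2) * (vpow N - inverse (vpow N)) + (vpow N + 1)^2 * (Q - inverse ((vpow N)^2) * (G + inverse s * fls_const (1/2)))"
    by simp
  moreover have "inR \<rat> (Q - inverse ((vpow N)^2) * (G + inverse s * fls_const (1/2)))"
    by (intro inR_add inR_diff inR_mult inR_iw2 Q(1) G(1) s_facts(4)[OF sd] inR_const sr_Rats) simp
  ultimately show ?case by blast
qed


lemma i_pow: "\<i> powi (N - 1 - j) * (-1) powi j = \<i> powi (N - 1 - - j)"
proof -
  have "\<i> powi (N - 1 - - j) = \<i> powi ((N - 1 - j) + 2 * j)" by (simp add: algebra_simps)
  also have "\<dots> = \<i> powi (N - 1 - j) * \<i> powi (2 * j)" by (rule power_int_add) simp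
  also have "\<i> powi (2 * j) = (\<i> powi 2) powi j" by (rule power_int_mult)
  also have "\<i> powi 2 = -1" by simp
  finally show ?thesis by simp
qed

lemma ttlem: assumes sd: "s = - inverse (vpow N)"
  shows "tt (- j) N = tt j N * s powi j"
proof -
  have "s = fls_const (-1) * fls_X powi (-(4*N))"
    using sd by (simp add: vpow_def fls_inverse_X_intpow)
  then have "s powi j = fls_const ((-1) powi j) * fls_X powi (-(4*N) * j)"
    by (simp only: power_int_mult_distrib power_int_mult fls_const_power_int)
  then have "tt j N * s powi j = (fls_const (\<i> powi (N - 1 - j)) * fls_const ((-1) powi j)) * (fls_X powi ((N + j)\<^sup>2) * fls_X powi (-(4*N) * j))"
    unfolding tt_def by (simp only: fls_X_power_int mult_ac)
  also have "\<dots> = fls_const (\<i> powi (N - 1 - - j)) * fls_X powi ((N + j)\<^sup>2 + (-(4*N) * j))"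
    by (simp only: fls_const_mult_const i_pow power_int_add[of fls_X, OF disjI1, OF fls_X_nonzero])
  also have "(N + j)\<^sup>2 + (-(4*N) * j) = (N + - j)\<^sup>2" by (simp add: power2_eq_square algebra_simps)
  finally show ?thesis unfolding tt_def by (simp only: fls_X_power_int)
qed

lemma abs_fin: fixes T c d e Q :: "'a::comm_ring_1"
  shows "T * (1 + c * d + e * Q) = T + c * T * d + T * e * Q"
  by (simp add: algebra_simps)

theorem lemma2p1:
  fixes N j k m :: int
  shows "(\<exists>P. in_ZV P \<and>
            AA (N - j) k - AA (N + j) k - 2 * br (2 * j) * br N * br (N - 1) / br 1 = (br N)\<^sup>2 * P)
       \<and> br (N - j) = - br (N + j) + br N * (vpow j + vpow (- j))
       \<and> (\<exists>Q. in_QV Q \<and>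
            tt (- j) N powi m = tt j N powi m
              + fls_const (of_int (m * j) / 2) * tt j N powi m * br N
              + tt j N powi m * (vpow N + 1)\<^sup>2 * Q)"
proof (intro conjI part1 part2)
  define s where "s = - inverse (vpow N)"
  obtain Q where Q: "inR \<rat> Q" "s powi (j*m) = 1 + of_int (j*m) * fls_const (1/2) * (vpow N - inverse (vpow N)) + (vpow N + 1)^2 * Q"
    using Flem[OF s_def] by blast
  have c: "fls_const (of_int (m * j) / 2 :: complex) = of_int (j*m) * fls_const (1/2)"
  proof -
    have "fls_const (of_int (m * j) / 2 :: complex) = fls_const (of_int (j*m)) * fls_const (1/2)"
      by (simp only: fls_const_mult_const mult.commute[of m j]) simp
    then show ?thesis by (simp only: fls_of_int)
  qed
  have b: "br N = vpow N - inverse (vpow N)" unfolding br_def by (simp only: vpow_neg)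
  have "tt (- j) N powi m = tt j N powi m * s powi (j*m)"
    by (simp only: ttlem[OF s_def] power_int_mult_distrib power_int_mult)
  also have "\<dots> = tt j N powi m + fls_const (of_int (m * j) / 2) * tt j N powi m * br N + tt j N powi m * (vpow N + 1)\<^sup>2 * Q"
    unfolding Q(2) c b by (rule abs_fin)
  finally show "\<exists>Q. in_QV Q \<and>
            tt (- j) N powi m = tt j N powi m
              + fls_const (of_int (m * j) / 2) * tt j N powi m * br N
              + tt j N powi m * (vpow N + 1)\<^sup>2 * Q"
    using Q(1) unfolding in_QV_eq by blast
qed

end
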